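(* Let $X_T>0$ be integrable with density $p$, independent of a standard gamma bridge $\{\gamma_{tT}\}$ with parameter $m>0$, $\xi_t=X_T\gamma_{tT}$, and let $P_{0t},P_{tT}>0$ be deterministic discount factors. Fix $0<t<T$ and $K>0$, and let $$S(t,y)=P_{tT}\frac{\int_y^\infty p(x)x^{2-mT}(x-y)^{m(T-t)-1}dx}{\int_y^\infty p(x)x^{1-mT}(x-y)^{m(T-t)-1}dx},$$ so that $S_t=S(t,\xi_t)$ (with $S_t=P_{tT}\mathbb E[X_T\mid\sigma(\xi_u,u\le t)]$). Suppose there is $y^*\ge0$ such that $S(t,y)\ge K$ for every $y>y^*$ and $S(t,y)\le K$ for every $0<y<y^*$ (wherever the denominator is positive). Then $$C_{0t}:=P_{0t}\,\mathbb E[(S_t-K)^+]=P_{0t}\int_{y^*}^\infty p(x)\,(xP_{tT}-K)\,\mathcal B_{mt,m(T-t)}(y^*/x)\,dx,$$ where for $a,b>0$ and $0\le u\le1$, $\mathcal B_{a,b}(u)=\frac{\int_u^1 z^{a-1}(1-z)^{b-1}dz}{\int_0^1 z^{a-1}(1-z)^{b-1}dz}$ is the complementary beta distribution function.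
   Context: A standard gamma process with growth rate $m>0$ on a probability space $(\Omega,\mathcal F,\mathbb Q)$ is a process $\{\gamma_t\}_{t\ge0}$ with $\gamma_0=0$ and independent increments, such that for $0\le s<t$ the increment $\gamma_t-\gamma_s$ has the gamma density $\mathbf 1_{\{x>0\}}x^{m(t-s)-1}e^{-x}/\Gamma[m(t-s)]$. A standard gamma bridge over $[0,T]$ with parameter $m$ is any process with the law of $\{\gamma_t/\gamma_T\}_{0\le t\le T}$ for such a gamma process. *)

theory Defs
  imports "HOL-Probability.Probability"
begin

definition gamma_density :: "real \<Rightarrow> real \<Rightarrow> real" where
  "gamma_density a x = (if x > 0 then x powr (a - 1) * exp (- x) / Gamma a else 0)"

definition gamma_process :: "'a measure \<Rightarrow> real \<Rightarrow> (real \<Rightarrow> 'a \<Rightarrow> real) \<Rightarrow> bool" where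
  "gamma_process M m g \<longleftrightarrow>
     prob_space M \<and>
     (\<forall>t\<ge>0. g t \<in> borel_measurable M) \<and>
     (AE \<omega> in M. g 0 \<omega> = 0) \<and>
     (\<forall>s t. 0 \<le> s \<and> s < t \<longrightarrow>
        distributed M lborel (\<lambda>\<omega>. g t \<omega> - g s \<omega>)
          (\<lambda>x. ennreal (gamma_density (m * (t - s)) x))) \<and>
     (\<forall>ts :: real list. sorted ts \<and> distinct ts \<and> (\<forall>x\<in>set ts. 0 \<le> x) \<longrightarrow>
        prob_space.indep_vars M (\<lambda>_. borel)
          (\<lambda>i \<omega>. g (ts ! Suc i) \<omega> - g (ts ! i) \<omega>) {..<length ts - 1})"

definition path_on :: "real \<Rightarrow> (real \<Rightarrow> 'a \<Rightarrow> real) \<Rightarrow> 'a \<Rightarrow> (real \<Rightarrow> real)" where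
  "path_on T b \<omega> = (\<lambda>t\<in>{0..T}. b t \<omega>)"

text \<open>Standard gamma bridge over [0,T] with parameter m: any process on M whose law
  (on the product sigma-algebra of paths over [0,T]) equals the law of
  gamma_t / gamma_T for a standard gamma process gamma with growth rate m
  (realised on some probability space, here on the canonical path type).\<close>
definition gamma_bridge :: "'a measure \<Rightarrow> real \<Rightarrow> real \<Rightarrow> (real \<Rightarrow> 'a \<Rightarrow> real) \<Rightarrow> bool" where
  "gamma_bridge M m T b \<longleftrightarrow>
     (\<forall>t\<in>{0..T}. b t \<in> borel_measurable M) \<and>
     (\<exists>(N :: (real \<Rightarrow> real) measure) g. gamma_process N m g \<and>
        distr M (Pi\<^sub>M {0..T} (\<lambda>_. borel)) (path_on T b) =
        distr N (Pi\<^sub>M {0..T} (\<lambda>_. borel)) (path_on T (\<lambda>t \<omega>. g t \<omega> / g T \<omega>)))"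

definition S_num :: "real \<Rightarrow> real \<Rightarrow> (real \<Rightarrow> real) \<Rightarrow> real \<Rightarrow> real \<Rightarrow> real" where
  "S_num m T p t y = set_lebesgue_integral lborel {y<..}
     (\<lambda>x. p x * x powr (2 - m * T) * (x - y) powr (m * (T - t) - 1))"

definition S_den :: "real \<Rightarrow> real \<Rightarrow> (real \<Rightarrow> real) \<Rightarrow> real \<Rightarrow> real \<Rightarrow> real" where
  "S_den m T p t y = set_lebesgue_integral lborel {y<..}
     (\<lambda>x. p x * x powr (1 - m * T) * (x - y) powr (m * (T - t) - 1))"

definition S_fun :: "real \<Rightarrow> real \<Rightarrow> real \<Rightarrow> (real \<Rightarrow> real) \<Rightarrow> real \<Rightarrow> real \<Rightarrow> real" where
  "S_fun m T PtT p t y = PtT * S_num m T p t y / S_den m T p t y"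

definition beta_compl :: "real \<Rightarrow> real \<Rightarrow> real \<Rightarrow> real" where
  "beta_compl a b u =
     set_lebesgue_integral lborel {u..1} (\<lambda>z. z powr (a - 1) * (1 - z) powr (b - 1)) /
     set_lebesgue_integral lborel {0..1} (\<lambda>z. z powr (a - 1) * (1 - z) powr (b - 1))"

text \<open>Independence of two random variables with possibly different value types
  (the right-hand side of the library lemma prob_space.indep_var_eq, which the
  library's indep_var can only state for equal value types).\<close>
definition indep_rv :: "'a measure \<Rightarrow> 'b measure \<Rightarrow> ('a \<Rightarrow> 'b) \<Rightarrow> 'c measure \<Rightarrow> ('a \<Rightarrow> 'c) \<Rightarrow> bool" where
  "indep_rv M S X T Y \<longleftrightarrow>
     X \<in> measurable M S \<and> Y \<in> measurable M T \<and>
     prob_space.indep_set M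
       (sigma_sets (space M) { X -` A \<inter> space M | A. A \<in> sets S})
       (sigma_sets (space M) { Y -` A \<inter> space M | A. A \<in> sets T})"

end

theory Submission
  imports Defs
begin


definition bdens :: "real \<Rightarrow> real \<Rightarrow> real \<Rightarrow> real" where
  "bdens a c u = indicator {0<..<1} u * u powr (a - 1) * (1 - u) powr (c - 1) / Beta a c"

lemma Beta_pos: "a > 0 \<Longrightarrow> c > 0 \<Longrightarrow> Beta a c > (0::real)"
  by (simp add: Beta_def Gamma_real_pos)

lemma bdens_nonneg: "a > 0 \<Longrightarrow> c > 0 \<Longrightarrow> bdens a c u \<ge> 0"
  using Beta_pos[of a c] by (simp add: bdens_def)

lemma bdens_meas[measurable]: "bdens a c \<in> borel_measurable borel"
  unfolding bdens_def by measurable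

lemma gamma_density_meas[measurable]: "gamma_density a \<in> borel_measurable borel"
  unfolding gamma_density_def by measurable

lemma nn_shift:
  fixes f :: "real \<Rightarrow> ennreal" assumes [measurable]: "f \<in> borel_measurable borel"
  shows "(\<integral>\<^sup>+y. f y \<partial>lborel) = (\<integral>\<^sup>+u. f (u - x) \<partial>lborel)"
  using nn_integral_real_affine[of f 1 "-x"] by simp

lemma nn_scale:
  fixes f :: "real \<Rightarrow> ennreal" assumes [measurable]: "f \<in> borel_measurable borel" and c: "c > 0"
  shows "(\<integral>\<^sup>+y. f y \<partial>lborel) = ennreal c * (\<integral>\<^sup>+z. f (c * z) \<partial>lborel)"
  using nn_integral_real_affine[of f c 0] c by simp

lemma beta_law:
  fixes a c :: real and h :: "real \<Rightarrow> ennreal"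
  assumes a: "a > 0" and c: "c > 0" and h[measurable]: "h \<in> borel_measurable borel"
  shows "(\<integral>\<^sup>+x. \<integral>\<^sup>+y. ennreal (gamma_density a x * gamma_density c y) * h (x / (x + y)) \<partial>lborel \<partial>lborel)
       = (\<integral>\<^sup>+z. ennreal (bdens a c z) * h z \<partial>lborel)"
proof -
  define k where "k = 1 / (Gamma a * Gamma c)"
  have k: "k > 0" using a c by (simp add: k_def Gamma_real_pos)
  define C where "C = (\<integral>\<^sup>+z. ennreal (indicator {0<..<1} z * z powr (a - 1) * (1 - z) powr (c - 1)) * h z \<partial>lborel)"
  define F where "F = (\<lambda>x u. ennreal (k * indicator {0<..} x * (if x < u then 1 else 0) * x powr (a - 1) * (u - x) powr (c - 1) * exp (- u)) * h (x / u))"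
  have step1: "(\<integral>\<^sup>+y. ennreal (gamma_density a x * gamma_density c y) * h (x / (x + y)) \<partial>lborel)
      = (\<integral>\<^sup>+u. F x u \<partial>lborel)" for x
  proof -
    have "(\<integral>\<^sup>+y. ennreal (gamma_density a x * gamma_density c y) * h (x / (x + y)) \<partial>lborel)
      = (\<integral>\<^sup>+u. ennreal (gamma_density a x * gamma_density c (u - x)) * h (x / (x + (u - x))) \<partial>lborel)"
      by (rule nn_shift) auto
    also have "\<dots> = (\<integral>\<^sup>+u. F x u \<partial>lborel)"
      by (intro nn_integral_cong)
         (auto simp: F_def gamma_density_def k_def indicator_def exp_diff exp_minus field_simps)
    finally show ?thesis .
  qed
  have Fmeas[measurable]: "(\<lambda>(x, u). F x u) \<in> borel_measurable (lborel \<Otimes>\<^sub>M lborel)"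
    unfolding F_def by measurable
  have step3: "(\<integral>\<^sup>+x. F x u \<partial>lborel) = ennreal (k * indicator {0..} u * u powr (a + c - 1) / exp u) * C" for u
  proof (cases "u > 0")
    case False
    then have "F x u = 0" for x by (auto simp: F_def indicator_def)
    with False show ?thesis by (auto simp: indicator_def)
  next
    case True
    have "(\<integral>\<^sup>+x. F x u \<partial>lborel) = ennreal u * (\<integral>\<^sup>+z. F (u * z) u \<partial>lborel)"
      by (rule nn_scale) (use True in auto)
    also have "\<dots> = ennreal u * (\<integral>\<^sup>+z. ennreal (k * u powr (a + c - 2) * exp (- u)) *
        (ennreal (indicator {0<..<1} z * z powr (a - 1) * (1 - z) powr (c - 1)) * h z) \<partial>lborel)"
    proof -
      have "F (u * z) u = ennreal (k * u powr (a + c - 2) * exp (- u)) *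
        (ennreal (indicator {0<..<1} z * z powr (a - 1) * (1 - z) powr (c - 1)) * h z)" for z
      proof (cases "0 < z \<and> z < 1")
        case True
        have e: "(u * z) powr (a - 1) * (u - u * z) powr (c - 1) = u powr (a + c - 2) * (z powr (a - 1) * (1 - z) powr (c - 1))"
        proof -
          have "(u - u * z) = u * (1 - z)" by (simp add: algebra_simps)
          then have "(u * z) powr (a - 1) * (u - u * z) powr (c - 1) = (u powr (a - 1) * z powr (a - 1)) * (u powr (c - 1) * (1 - z) powr (c - 1))"
            using \<open>u > 0\<close> True by (simp add: powr_mult)
          also have "\<dots> = (u powr (a - 1) * u powr (c - 1)) * (z powr (a - 1) * (1 - z) powr (c - 1))" by simp
          also have "u powr (a - 1) * u powr (c - 1) = u powr (a + c - 2)"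
            by (simp add: powr_add[symmetric])
          finally show ?thesis .
        qed
        have "F (u * z) u = ennreal (k * ((u * z) powr (a - 1) * (u - u * z) powr (c - 1)) * exp (- u)) * h z"
          using True \<open>u > 0\<close> by (simp add: F_def indicator_def mult_ac)
        also have "\<dots> = ennreal ((k * u powr (a + c - 2) * exp (- u)) * (z powr (a - 1) * (1 - z) powr (c - 1))) * h z"
          unfolding e by (simp add: mult_ac)
        also have "\<dots> = ennreal (k * u powr (a + c - 2) * exp (- u)) * (ennreal (indicator {0<..<1} z * z powr (a - 1) * (1 - z) powr (c - 1)) * h z)"
          using True k by (simp add: ennreal_mult mult_ac)
        finally show ?thesis .
      next
        case False
        then show ?thesis using \<open>u > 0\<close> by (auto simp: F_def indicator_def mult_le_cancel_left1 not_less zero_less_mult_iff)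
      qed
      then show ?thesis using True by simp
    qed
    also have "\<dots> = ennreal u * (ennreal (k * u powr (a + c - 2) * exp (- u)) * C)"
      unfolding C_def by (subst nn_integral_cmult) auto
    also have "\<dots> = ennreal (k * indicator {0..} u * u powr (a + c - 1) / exp u) * C"
    proof -
      have "u * (k * u powr (a + c - 2) * exp (- u)) = k * indicator {0..} u * u powr (a + c - 1) / exp u"
        using True by (simp add: powr_add[symmetric] powr_diff exp_minus field_simps powr_one_gt_zero_iff power2_eq_square)
      then show ?thesis using True k by (simp add: ennreal_mult[symmetric] mult.assoc[symmetric])
    qed
    finally show ?thesis .
  qed
  have "(\<integral>\<^sup>+x. \<integral>\<^sup>+y. ennreal (gamma_density a x * gamma_density c y) * h (x / (x + y)) \<partial>lborel \<partial>lborel)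
      = (\<integral>\<^sup>+x. \<integral>\<^sup>+u. F x u \<partial>lborel \<partial>lborel)"
    by (simp add: step1)
  also have "\<dots> = (\<integral>\<^sup>+u. \<integral>\<^sup>+x. F x u \<partial>lborel \<partial>lborel)"
    using lborel_pair.Fubini'[OF Fmeas] by simp
  also have "\<dots> = (\<integral>\<^sup>+u. ennreal (k * indicator {0..} u * u powr (a + c - 1) / exp u) * C \<partial>lborel)"
    by (simp add: step3)
  also have "\<dots> = (\<integral>\<^sup>+u. ennreal k * ennreal (indicator {0..} u * u powr (a + c - 1) / exp u) \<partial>lborel) * C"
    by (subst nn_integral_multc) (auto intro!: nn_integral_cong simp: ennreal_mult[symmetric] k less_imp_le mult.assoc)
  also have "\<dots> = ennreal k * ennreal (Gamma (a + c)) * C"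
    using a c by (subst nn_integral_cmult) (auto simp: Gamma_conv_nn_integral_real)
  also have "\<dots> = ennreal (1 / Beta a c) * C"
    using a c k by (simp add: ennreal_mult[symmetric] Gamma_real_pos less_imp_le k_def Beta_def)
  also have "\<dots> = (\<integral>\<^sup>+z. ennreal (bdens a c z) * h z \<partial>lborel)"
    unfolding C_def using Beta_pos[OF a c]
    by (subst nn_integral_cmult[symmetric]) (auto intro!: nn_integral_cong simp: bdens_def ennreal_mult[symmetric] mult.assoc[symmetric] indicator_def)
  finally show ?thesis .
qed

lemma powr_inv3:
  fixes x :: real assumes "x > 0"
  shows "x powr (1 - (a + c)) = 1 / (x * x powr (a - 1) * x powr (c - 1))"
proof -
  have "x powr (1 + (a - 1) + (c - 1) + (1 - (a + c))) = x powr 1 * x powr (a - 1) * x powr (c - 1) * x powr (1 - (a + c))"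
    by (simp only: powr_add)
  moreover have "1 + (a - 1) + (c - 1) + (1 - (a + c)) = 0" by simp
  ultimately have "x * x powr (a - 1) * x powr (c - 1) * x powr (1 - (a + c)) = 1" using assms by simp
  moreover have "x * x powr (a - 1) * x powr (c - 1) > 0" using assms by simp
  ultimately show ?thesis by (auto simp: eq_divide_eq mult_ac)
qed

lemma star:
  fixes q :: "real \<Rightarrow> real" and G :: "real \<Rightarrow> ennreal" and a c :: real
  assumes a: "a > 0" and c: "c > 0" and q[measurable]: "q \<in> borel_measurable borel"
    and q_nn: "\<And>x. q x \<ge> 0" and q0: "\<And>x. x \<le> 0 \<Longrightarrow> q x = 0"
    and G[measurable]: "G \<in> borel_measurable borel"
  shows "(\<integral>\<^sup>+x. \<integral>\<^sup>+u. ennreal (q x * bdens a c u) * G (x * u) \<partial>lborel \<partial>lborel) =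
    (\<integral>\<^sup>+y. ennreal (indicator {0<..} y * y powr (a - 1) / Beta a c) *
       (\<integral>\<^sup>+x. ennreal (indicator {y<..} x * (q x * x powr (1 - (a + c)) * (x - y) powr (c - 1))) \<partial>lborel) * G y \<partial>lborel)"
proof -
  have B: "Beta a c > 0" using Beta_pos[OF a c] .
  define H where "H = (\<lambda>x y. ennreal (indicator {0<..} y * y powr (a - 1) / Beta a c *
      ((if y < x then 1 else 0) * (q x * x powr (1 - (a + c)) * (x - y) powr (c - 1)))) * G y)"
  have Hmeas[measurable]: "(\<lambda>(x, y). H x y) \<in> borel_measurable (lborel \<Otimes>\<^sub>M lborel)"
    unfolding H_def by measurable
  have step1: "(\<integral>\<^sup>+u. ennreal (q x * bdens a c u) * G (x * u) \<partial>lborel) = (\<integral>\<^sup>+y. H x y \<partial>lborel)" for x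
  proof (cases "x > 0")
    case False
    then have "H x y = 0" for y by (auto simp: H_def indicator_def)
    with False q0[of x] show ?thesis by simp
  next
    case True
    have "(\<integral>\<^sup>+u. ennreal (q x * bdens a c u) * G (x * u) \<partial>lborel)
      = ennreal (1 / x) * (\<integral>\<^sup>+y. ennreal (q x * bdens a c (1 / x * y)) * G (x * (1 / x * y)) \<partial>lborel)"
      by (rule nn_scale) (use True in auto)
    also have "\<dots> = (\<integral>\<^sup>+y. ennreal (1 / x) * (ennreal (q x * bdens a c (1 / x * y)) * G y) \<partial>lborel)"
      using True by (subst nn_integral_cmult) auto
    also have "\<dots> = (\<integral>\<^sup>+y. H x y \<partial>lborel)"
    proof (intro nn_integral_cong)
      fix y
      have r: "1 / x * (q x * bdens a c (1 / x * y)) = indicator {0<..} y * y powr (a - 1) / Beta a c *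
        ((if y < x then 1 else 0) * (q x * x powr (1 - (a + c)) * (x - y) powr (c - 1)))"
      proof (cases "0 < y \<and> y < x")
        case yy: True
        have d1: "(y / x) powr (a - 1) = y powr (a - 1) / x powr (a - 1)"
          using yy True by (simp add: powr_divide)
        have "1 - y / x = (x - y) / x" using True by (simp add: field_simps)
        then have d2: "(1 - y / x) powr (c - 1) = (x - y) powr (c - 1) / x powr (c - 1)"
          using yy True by (simp add: powr_divide)
        have "bdens a c (1 / x * y) = (y / x) powr (a - 1) * (1 - y / x) powr (c - 1) / Beta a c"
          using yy True by (simp add: bdens_def indicator_def)
        also have "\<dots> = y powr (a - 1) * (x - y) powr (c - 1) / (x powr (a - 1) * x powr (c - 1) * Beta a c)"
          unfolding d1 d2 by simp
        finally have bd: "bdens a c (1 / x * y) = y powr (a - 1) * (x - y) powr (c - 1) / (x powr (a - 1) * x powr (c - 1) * Beta a c)" .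
        show ?thesis unfolding bd using yy True B
          by (simp add: powr_inv3 indicator_def field_simps)
      next
        case False
        then have "\<not> (0 < 1 / x * y \<and> 1 / x * y < 1)"
          using True by (auto simp: field_simps zero_less_mult_iff)
        then have "bdens a c (1 / x * y) = 0" by (simp add: bdens_def indicator_def)
        then show ?thesis using False by (auto simp: indicator_def)
      qed
      have "ennreal (1 / x) * (ennreal (q x * bdens a c (1 / x * y)) * G y)
        = ennreal (1 / x * (q x * bdens a c (1 / x * y))) * G y"
        using True by (simp add: ennreal_mult'[symmetric] mult.assoc[symmetric])
      also have "\<dots> = H x y" unfolding H_def r ..
      finally show "ennreal (1 / x) * (ennreal (q x * bdens a c (1 / x * y)) * G y) = H x y" .
    qed
    finally show ?thesis .
  qed
  have step3: "(\<integral>\<^sup>+x. H x y \<partial>lborel) = ennreal (indicator {0<..} y * y powr (a - 1) / Beta a c) *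
       (\<integral>\<^sup>+x. ennreal (indicator {y<..} x * (q x * x powr (1 - (a + c)) * (x - y) powr (c - 1))) \<partial>lborel) * G y" for y
  proof -
    have "H x y = ennreal (indicator {0<..} y * y powr (a - 1) / Beta a c) *
       ennreal (indicator {y<..} x * (q x * x powr (1 - (a + c)) * (x - y) powr (c - 1))) * G y" for x
      unfolding H_def using B q_nn[of x]
      by (subst ennreal_mult[symmetric]) (auto simp: indicator_def)
    then show ?thesis
      by (simp add: nn_integral_multc nn_integral_cmult)
  qed
  have "(\<integral>\<^sup>+x. \<integral>\<^sup>+u. ennreal (q x * bdens a c u) * G (x * u) \<partial>lborel \<partial>lborel)
      = (\<integral>\<^sup>+x. \<integral>\<^sup>+y. H x y \<partial>lborel \<partial>lborel)" by (simp add: step1)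
  also have "\<dots> = (\<integral>\<^sup>+y. \<integral>\<^sup>+x. H x y \<partial>lborel \<partial>lborel)"
    using lborel_pair.Fubini'[OF Hmeas] by simp
  finally show ?thesis by (simp add: step3)
qed

lemma set_int_nn:
  fixes f :: "real \<Rightarrow> real"
  assumes [measurable]: "f \<in> borel_measurable borel" "A \<in> sets borel" and nn: "\<And>x. x \<in> A \<Longrightarrow> 0 \<le> f x"
  shows "set_lebesgue_integral lborel A f = enn2real (\<integral>\<^sup>+x. ennreal (indicator A x * f x) \<partial>lborel)"
  unfolding set_lebesgue_integral_def
  by (subst integral_eq_nn_integral) (auto simp: indicator_def nn)

lemma Beta_nn: "a > 0 \<Longrightarrow> c > 0 \<Longrightarrow>
  (\<integral>\<^sup>+z. ennreal (indicator {0..1} z * (z powr (a - 1) * (1 - z) powr (c - 1))) \<partial>lborel) = ennreal (Beta a c)"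
  using nn_integral_has_integral_lebesgue[OF _ has_integral_Beta_real, of a c] by (simp add: mult.assoc)

lemma bc_lemma:
  fixes a c x ys :: real
  assumes a: "a > 0" and c: "c > 0" and x: "x > 0" and ys: "ys \<ge> 0"
  shows "(\<integral>\<^sup>+u. ennreal (bdens a c u) * indicator {ys<..} (x * u) \<partial>lborel)
     = ennreal (if ys < x then beta_compl a c (ys / x) else 0)"
proof (cases "ys < x")
  case False
  have "ennreal (bdens a c u) * indicator {ys<..} (x * u) = 0" for u
  proof (cases "ys < x * u")
    case True
    with False have "x * 1 < x * u" by linarith
    then have "u > 1" using x by (simp only: mult_less_cancel_left_pos)
    then show ?thesis by (simp add: bdens_def)
  qed simp
  then have "(\<integral>\<^sup>+u. ennreal (bdens a c u) * indicator {ys<..} (x * u) \<partial>lborel) = (\<integral>\<^sup>+(u::real). 0 \<partial>lborel)"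
    by (rule nn_integral_cong)
  with False show ?thesis by simp
next
  case True
  define v where "v = ys / x"
  have v: "0 \<le> v" "v < 1" using True x ys by (auto simp: v_def)
  define f where "f = (\<lambda>z::real. z powr (a - 1) * (1 - z) powr (c - 1))"
  have fm[measurable]: "f \<in> borel_measurable borel" unfolding f_def by measurable
  have B: "Beta a c > 0" using Beta_pos[OF a c] .
  define I where "I = (\<integral>\<^sup>+z. ennreal (indicator {v..1} z * f z) \<partial>lborel)"
  have "I \<le> (\<integral>\<^sup>+z. ennreal (indicator {0..1} z * f z) \<partial>lborel)"
    unfolding I_def using v by (intro nn_integral_mono) (auto simp: indicator_def f_def)
  also have "\<dots> = ennreal (Beta a c)" using Beta_nn[OF a c] by (simp add: f_def)
  finally have Ifin: "I \<noteq> \<top>" by (metis ennreal_neq_top neq_top_trans)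
  have den: "set_lebesgue_integral lborel {0..1} f = Beta a c"
    using set_int_nn[of f "{0..1}"] Beta_nn[OF a c] B by (simp add: f_def)
  have num: "set_lebesgue_integral lborel {v..1} f = enn2real I"
    unfolding I_def by (rule set_int_nn) (auto simp: f_def)
  have "(\<integral>\<^sup>+u. ennreal (bdens a c u) * indicator {ys<..} (x * u) \<partial>lborel)
     = (\<integral>\<^sup>+u. ennreal (1 / Beta a c) * ennreal (indicator {v..1} u * f u) \<partial>lborel)"
  proof (rule nn_integral_cong_AE)
    have "AE u in lborel. u \<noteq> 0 \<and> u \<noteq> 1 \<and> u \<noteq> v"
      using AE_lborel_singleton[of 0] AE_lborel_singleton[of 1] AE_lborel_singleton[of v]
      by eventually_elim auto
    then show "AE u in lborel. ennreal (bdens a c u) * indicator {ys<..} (x * u)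
       = ennreal (1 / Beta a c) * ennreal (indicator {v..1} u * f u)"
    proof eventually_elim
      case (elim u)
      have iff: "ys < x * u \<longleftrightarrow> v < u" using x by (simp add: v_def field_simps)
      show ?case
      proof (cases "0 < u \<and> u < 1 \<and> v < u")
        case True
        then show ?thesis using iff B
          by (simp add: bdens_def f_def indicator_def ennreal_mult'[symmetric] less_imp_le)
      next
        case False
        then have "\<not> (0 < u \<and> u < 1 \<and> v < u)" .
        then show ?thesis using iff elim v
          by (auto simp: bdens_def f_def indicator_def)
      qed
    qed
  qed
  also have "\<dots> = ennreal (1 / Beta a c) * I"
    unfolding I_def by (rule nn_integral_cmult) auto
  also have "\<dots> = ennreal (beta_compl a c (ys / x))"
  proof -
    have "beta_compl a c (ys / x) = enn2real I / Beta a c"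
      unfolding beta_compl_def using den num by (simp add: f_def v_def)
    moreover have "ennreal (1 / Beta a c) * I = ennreal (1 / Beta a c) * ennreal (enn2real I)"
      using Ifin by (simp add: ennreal_enn2real_if)
    ultimately show ?thesis using B by (simp add: ennreal_mult'[symmetric])
  qed
  finally show ?thesis using True by simp
qed

lemma gamma_density_nonneg: "a > 0 \<Longrightarrow> gamma_density a x \<ge> 0"
  by (simp add: gamma_density_def Gamma_real_pos)

lemma gamma_ratio_law:
  fixes N :: "'b measure" and g :: "real \<Rightarrow> 'b \<Rightarrow> real"
  assumes gp: "gamma_process N m g" and m: "m > 0" and t: "0 < t" "t < T"
  shows "distributed N lborel (\<lambda>\<omega>. g t \<omega> / g T \<omega>) (\<lambda>u. ennreal (bdens (m * t) (m * (T - t)) u))"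
proof -
  note gpd = gp[unfolded gamma_process_def]
  interpret N: prob_space N using gpd by blast
  have gm[measurable]: "g s \<in> borel_measurable N" if "s \<ge> 0" for s using gpd that by blast
  have g0: "AE \<omega> in N. g 0 \<omega> = 0" using gpd by blast
  have incr: "distributed N lborel (\<lambda>\<omega>. g v \<omega> - g u \<omega>) (\<lambda>x. ennreal (gamma_density (m * (v - u)) x))"
    if "0 \<le> u" "u < v" for u v using gpd that by blast
  have ivs: "N.indep_vars (\<lambda>_. borel) (\<lambda>i \<omega>. g ([0, t, T] ! Suc i) \<omega> - g ([0, t, T] ! i) \<omega>) {..<length [0, t, T] - 1}"
    using gpd t by (intro gpd[THEN conjunct2, THEN conjunct2, THEN conjunct2, THEN conjunct2, rule_format]) auto
  define G1 where "G1 = (\<lambda>\<omega>. g t \<omega> - g 0 \<omega>)"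
  define G2 where "G2 = (\<lambda>\<omega>. g T \<omega> - g t \<omega>)"
  have [measurable]: "G1 \<in> borel_measurable N" "G2 \<in> borel_measurable N"
    unfolding G1_def G2_def using t by auto
  let ?F = "\<lambda>i. sigma_sets (space N) {(\<lambda>\<omega>. g ([0, t, T] ! Suc i) \<omega> - g ([0, t, T] ! i) \<omega>) -` A \<inter> space N | A. A \<in> sets borel}"
  have l2: "length [0, t, T] - 1 = (2::nat)" by simp
  have isets: "N.indep_sets ?F {..<2}" using ivs unfolding N.indep_vars_def l2 by blast
  have F0: "?F 0 = sigma_sets (space N) {G1 -` A \<inter> space N | A. A \<in> sets borel}" by (simp add: G1_def)
  have F1: "?F 1 = sigma_sets (space N) {G2 -` A \<inter> space N | A. A \<in> sets borel}" by (simp add: G2_def)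
  have ind: "N.indep_var lborel G1 lborel G2"
    unfolding N.indep_var_eq
  proof (intro conjI)
    show "G1 \<in> measurable N lborel" "G2 \<in> measurable N lborel" by auto
    have ev: "?F i \<subseteq> N.events" if "i < 2" for i
      using isets that unfolding N.indep_sets_def by blast
    show "N.indep_set (sigma_sets (space N) {G1 -` A \<inter> space N |A. A \<in> sets lborel})
                      (sigma_sets (space N) {G2 -` A \<inter> space N |A. A \<in> sets lborel})"
      unfolding N.indep_sets2_eq sets_lborel
    proof (intro conjI ballI)
      show "sigma_sets (space N) {G1 -` A \<inter> space N |A. A \<in> sets borel} \<subseteq> N.events"
        using ev[of 0] F0 by simp
      show "sigma_sets (space N) {G2 -` A \<inter> space N |A. A \<in> sets borel} \<subseteq> N.events"
        using ev[of 1] F1 by simp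
      fix a b assume a: "a \<in> sigma_sets (space N) {G1 -` A \<inter> space N |A. A \<in> sets borel}"
        and b: "b \<in> sigma_sets (space N) {G2 -` A \<inter> space N |A. A \<in> sets borel}"
      have "N.prob (\<Inter>j\<in>{0::nat, 1}. (if j = 0 then a else b)) = (\<Prod>j\<in>{0::nat, 1}. N.prob (if j = 0 then a else b))"
        by (rule N.indep_setsD[OF isets]) (use a b F0 F1 in auto)
      then show "N.prob (a \<inter> b) = N.prob a * N.prob b" by (simp add: Int_commute)
    qed
  qed
  define a where "a = m * t"
  define c where "c = m * (T - t)"
  have a: "a > 0" and c: "c > 0" using m t by (auto simp: a_def c_def)
  have d1: "distributed N lborel G1 (\<lambda>x. ennreal (gamma_density a x))"
    using incr[of 0 t] t unfolding G1_def a_def by simp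
  have d2: "distributed N lborel G2 (\<lambda>x. ennreal (gamma_density c x))"
    using incr[of t T] t unfolding G2_def c_def by simp
  have joint: "distributed N (lborel \<Otimes>\<^sub>M lborel) (\<lambda>\<omega>. (G1 \<omega>, G2 \<omega>))
      (\<lambda>(x, y). ennreal (gamma_density a x) * ennreal (gamma_density c y))"
    by (rule N.distributed_joint_indep[OF _ _ d1 d2 ind]) (auto intro: lborel.sigma_finite_measure_axioms)
  have key: "(\<integral>\<^sup>+\<omega>. h (g t \<omega> / g T \<omega>) \<partial>N) = (\<integral>\<^sup>+z. ennreal (bdens a c z) * h z \<partial>lborel)"
    if h[measurable]: "h \<in> borel_measurable borel" for h
  proof -
    have "(\<integral>\<^sup>+\<omega>. h (g t \<omega> / g T \<omega>) \<partial>N) = (\<integral>\<^sup>+\<omega>. h (G1 \<omega> / (G1 \<omega> + G2 \<omega>)) \<partial>N)"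
      by (rule nn_integral_cong_AE) (use g0 in \<open>auto simp: G1_def G2_def\<close>)
    also have "\<dots> = (\<integral>\<^sup>+xy. (case xy of (x, y) \<Rightarrow> ennreal (gamma_density a x) * ennreal (gamma_density c y)) *
          (case xy of (x, y) \<Rightarrow> h (x / (x + y))) \<partial>(lborel \<Otimes>\<^sub>M lborel))"
      by (subst distributed_nn_integral[OF joint]) auto
    also have "\<dots> = (\<integral>\<^sup>+x. \<integral>\<^sup>+y. ennreal (gamma_density a x * gamma_density c y) * h (x / (x + y)) \<partial>lborel \<partial>lborel)"
      by (subst lborel.nn_integral_fst[symmetric])
         (auto simp: ennreal_mult gamma_density_nonneg a c)
    also have "\<dots> = (\<integral>\<^sup>+z. ennreal (bdens a c z) * h z \<partial>lborel)"
      by (rule beta_law[OF a c h])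
    finally show ?thesis .
  qed
  have R[measurable]: "(\<lambda>\<omega>. g t \<omega> / g T \<omega>) \<in> borel_measurable N" using t by auto
  have "distr N lborel (\<lambda>\<omega>. g t \<omega> / g T \<omega>) = density lborel (\<lambda>u. ennreal (bdens a c u))"
  proof (rule measure_eqI)
    fix A assume A: "A \<in> sets (distr N lborel (\<lambda>\<omega>. g t \<omega> / g T \<omega>))"
    then have A'[measurable]: "A \<in> sets borel" by simp
    have "emeasure (distr N lborel (\<lambda>\<omega>. g t \<omega> / g T \<omega>)) A = (\<integral>\<^sup>+x. indicator A x \<partial>distr N lborel (\<lambda>\<omega>. g t \<omega> / g T \<omega>))"
      using A by simp
    also have "\<dots> = (\<integral>\<^sup>+\<omega>. indicator A (g t \<omega> / g T \<omega>) \<partial>N)"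
      by (rule nn_integral_distr) auto
    also have "\<dots> = (\<integral>\<^sup>+z. ennreal (bdens a c z) * indicator A z \<partial>lborel)"
      by (rule key) auto
    also have "\<dots> = emeasure (density lborel (\<lambda>u. ennreal (bdens a c u))) A"
      by (subst emeasure_density) auto
    finally show "emeasure (distr N lborel (\<lambda>\<omega>. g t \<omega> / g T \<omega>)) A = emeasure (density lborel (\<lambda>u. ennreal (bdens a c u))) A" .
  qed simp
  then show ?thesis unfolding distributed_def a_def c_def by auto
qed

lemma bridge_law:
  fixes M :: "'a measure" and b :: "real \<Rightarrow> 'a \<Rightarrow> real"
  assumes bridge: "gamma_bridge M m T b" and m: "m > 0" and t: "0 < t" "t < T"
  shows "distributed M lborel (b t) (\<lambda>u. ennreal (bdens (m * t) (m * (T - t)) u))"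
proof -
  from bridge obtain N :: "(real \<Rightarrow> real) measure" and g where gp: "gamma_process N m g"
    and eq: "distr M (Pi\<^sub>M {0..T} (\<lambda>_. borel)) (path_on T b) =
        distr N (Pi\<^sub>M {0..T} (\<lambda>_. borel)) (path_on T (\<lambda>t \<omega>. g t \<omega> / g T \<omega>))"
    unfolding gamma_bridge_def by blast
  have bm: "b s \<in> borel_measurable M" if "s \<in> {0..T}" for s using bridge that unfolding gamma_bridge_def by blast
  have gm: "g s \<in> borel_measurable N" if "s \<ge> 0" for s using gp that unfolding gamma_process_def by blast
  have T0: "T \<ge> 0" using t by simp
  have pm1: "path_on T b \<in> measurable M (Pi\<^sub>M {0..T} (\<lambda>_. borel))"
    unfolding path_on_def by (rule measurable_restrict) (use bm in auto)
  have pm2: "path_on T (\<lambda>t \<omega>. g t \<omega> / g T \<omega>) \<in> measurable N (Pi\<^sub>M {0..T} (\<lambda>_. borel))"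
    unfolding path_on_def by (rule measurable_restrict) (use gm T0 in auto)
  have tI: "t \<in> {0..T}" using t by auto
  have pr: "(\<lambda>f. f t) \<in> measurable (Pi\<^sub>M {0..T} (\<lambda>_. borel)) lborel"
    using measurable_component_singleton[OF tI, of "\<lambda>_. borel"] by simp
  have "distr M lborel (b t) = distr M lborel ((\<lambda>f. f t) \<circ> path_on T b)"
    using tI by (simp add: path_on_def o_def)
  also have "\<dots> = distr (distr M (Pi\<^sub>M {0..T} (\<lambda>_. borel)) (path_on T b)) lborel (\<lambda>f. f t)"
    by (rule distr_distr[symmetric, OF pr pm1])
  also have "\<dots> = distr N lborel ((\<lambda>f. f t) \<circ> path_on T (\<lambda>t \<omega>. g t \<omega> / g T \<omega>))"
    unfolding eq by (rule distr_distr[OF pr pm2])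
  also have "\<dots> = distr N lborel (\<lambda>\<omega>. g t \<omega> / g T \<omega>)"
    using tI by (simp add: path_on_def o_def)
  also have "\<dots> = density lborel (\<lambda>u. ennreal (bdens (m * t) (m * (T - t)) u))"
    using gamma_ratio_law[OF gp m t] unfolding distributed_def by blast
  finally show ?thesis unfolding distributed_def using bm[OF tI] by auto
qed

lemma joint_law:
  fixes M :: "'a measure" and X :: "'a \<Rightarrow> real" and b :: "real \<Rightarrow> 'a \<Rightarrow> real" and p :: "real \<Rightarrow> real"
  assumes M: "prob_space M"
    and X_dens: "distributed M lborel X (\<lambda>x. ennreal (p x))"
    and bridge: "gamma_bridge M m T b"
    and indep: "indep_rv M borel X (Pi\<^sub>M {0..T} (\<lambda>_. borel)) (path_on T b)"
    and m: "m > 0" and t: "0 < t" "t < T"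
  shows "distributed M (lborel \<Otimes>\<^sub>M lborel) (\<lambda>\<omega>. (X \<omega>, b t \<omega>))
      (\<lambda>(x, u). ennreal (p x) * ennreal (bdens (m * t) (m * (T - t)) u))"
proof -
  interpret M: prob_space M by (rule M)
  have bt: "distributed M lborel (b t) (\<lambda>u. ennreal (bdens (m * t) (m * (T - t)) u))"
    by (rule bridge_law[OF bridge m t])
  have bm: "b s \<in> borel_measurable M" if "s \<in> {0..T}" for s using bridge that unfolding gamma_bridge_def by blast
  have tI: "t \<in> {0..T}" using t by auto
  let ?P = "Pi\<^sub>M {0..T} (\<lambda>_::real. borel :: real measure)"
  have pm1: "path_on T b \<in> measurable M ?P"
    unfolding path_on_def by (rule measurable_restrict) (use bm in auto)
  have pr: "(\<lambda>f. f t) \<in> measurable ?P borel"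
    using measurable_component_singleton[OF tI, of "\<lambda>_. borel"] by simp
  have Xm: "X \<in> measurable M lborel" using X_dens by (simp add: distributed_def)
  have ind: "M.indep_var lborel X lborel (b t)"
    unfolding M.indep_var_eq
  proof (intro conjI)
    show "X \<in> measurable M lborel" by (rule Xm)
    show "b t \<in> measurable M lborel" using bm[OF tI] by simp
    have i2: "M.indep_set (sigma_sets (space M) {X -` A \<inter> space M | A. A \<in> sets borel})
       (sigma_sets (space M) {path_on T b -` A \<inter> space M | A. A \<in> sets ?P})"
      using indep unfolding indep_rv_def by blast
    have sub: "sigma_sets (space M) {b t -` A \<inter> space M | A. A \<in> sets borel}
       \<subseteq> sigma_sets (space M) {path_on T b -` A \<inter> space M | A. A \<in> sets ?P}"
    proof (rule sigma_sets_mono')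
      show "{b t -` A \<inter> space M | A. A \<in> sets borel} \<subseteq> {path_on T b -` A \<inter> space M | A. A \<in> sets ?P}"
      proof safe
        fix A :: "real set" assume A: "A \<in> sets borel"
        have "b t -` A \<inter> space M = path_on T b -` ((\<lambda>f. f t) -` A \<inter> space ?P) \<inter> space M"
          using measurable_space[OF pm1] tI by (auto simp: path_on_def)
        moreover have "(\<lambda>f. f t) -` A \<inter> space ?P \<in> sets ?P"
          using measurable_sets[OF pr A] .
        ultimately show "\<exists>B. b t -` A \<inter> space M = path_on T b -` B \<inter> space M \<and> B \<in> sets ?P" by blast
      qed
    qed
    show "M.indep_set (sigma_sets (space M) {X -` A \<inter> space M |A. A \<in> sets lborel})
        (sigma_sets (space M) {b t -` A \<inter> space M |A. A \<in> sets lborel})"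
      using i2 sub unfolding M.indep_sets2_eq sets_lborel by blast
  qed
  show ?thesis
    by (rule M.distributed_joint_indep[OF _ _ X_dens bt ind]) (auto intro: lborel.sigma_finite_measure_axioms)
qed


lemma ind_Ioi: "indicator {y<..} x = (if y < x then 1 else (0::real))" by (simp add: indicator_def)
lemma ind_Icc: "indicator {u..1} x = (if u \<le> x \<and> x \<le> 1 then 1 else (0::real))" by (simp add: indicator_def)

lemma S_fun_meas[measurable]: assumes [measurable]: "p \<in> borel_measurable borel"
  shows "S_fun m T PtT p t \<in> borel_measurable borel"
  unfolding S_fun_def S_num_def S_den_def set_lebesgue_integral_def ind_Ioi by measurable

lemma bc_meas[measurable]: "(\<lambda>x. beta_compl a c (ys / x)) \<in> borel_measurable borel"
  unfolding beta_compl_def set_lebesgue_integral_def ind_Icc by measurable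

lemma Jmeas[measurable]: assumes [measurable]: "p \<in> borel_measurable borel"
  shows "(\<lambda>y. \<integral>\<^sup>+x. ennreal (indicator {y<..} x * (p x * x powr e1 * (x - y) powr e2)) \<partial>lborel) \<in> borel_measurable borel"
  unfolding ind_Ioi by measurable
theorem mainTheorem14:
  fixes M :: "'a measure" and X :: "'a \<Rightarrow> real" and p :: "real \<Rightarrow> real"
    and b :: "real \<Rightarrow> 'a \<Rightarrow> real"
    and m T t K P0t PtT ystar :: real
  assumes M: "prob_space M"
    and Xmeas: "X \<in> borel_measurable M"
    and p_meas: "p \<in> borel_measurable borel"
    and p_nonneg: "\<And>x. 0 \<le> p x"
    and X_dens: "distributed M lborel X (\<lambda>x. ennreal (p x))"
    and X_pos: "AE \<omega> in M. X \<omega> > 0"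
    and X_int: "integrable M X"
    and m_pos: "m > 0"
    and bridge: "gamma_bridge M m T b"
    and indep: "indep_rv M borel X (Pi\<^sub>M {0..T} (\<lambda>_. borel)) (path_on T b)"
    and P0t: "P0t > 0" and PtT: "PtT > 0"
    and t: "0 < t" "t < T"
    and K: "K > 0"
    and ystar: "ystar \<ge> 0"
    and above: "\<And>y. y > ystar \<Longrightarrow> S_den m T p t y > 0 \<Longrightarrow> S_fun m T PtT p t y \<ge> K"
    and below: "\<And>y. 0 < y \<Longrightarrow> y < ystar \<Longrightarrow> S_den m T p t y > 0 \<Longrightarrow> S_fun m T PtT p t y \<le> K"
  shows "P0t * (\<integral>\<omega>. max 0 (S_fun m T PtT p t (X \<omega> * b t \<omega>) - K) \<partial>M)
       = P0t * set_lebesgue_integral lborel {ystar<..}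
           (\<lambda>x. p x * (x * PtT - K) * beta_compl (m * t) (m * (T - t)) (ystar / x))"
proof -
  interpret M: prob_space M by (rule M)
  define a where "a = m * t"
  define c where "c = m * (T - t)"
  have a: "a > 0" and c: "c > 0" using m_pos t by (auto simp: a_def c_def)
  have ac: "1 - (a + c) = 1 - m * T" by (simp add: a_def c_def algebra_simps)
  have Bpos: "Beta a c > 0" by (rule Beta_pos[OF a c])
  note p_meas[measurable]
  define q where "q = (\<lambda>x. p x * indicator {0<..} x)"
  have q_meas[measurable]: "q \<in> borel_measurable borel" unfolding q_def by measurable
  have q_nn: "\<And>x. q x \<ge> 0" using p_nonneg by (simp add: q_def)
  have q0: "\<And>x. x \<le> 0 \<Longrightarrow> q x = 0" by (simp add: q_def)
  have qp: "\<And>x. x > 0 \<Longrightarrow> q x = p x" by (simp add: q_def)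
  have Xm[measurable]: "X \<in> borel_measurable M" by (rule Xmeas)
  have null: "emeasure M (X -` {..0} \<inter> space M) = 0"
  proof -
    have "{\<omega> \<in> space M. \<not> X \<omega> > 0} = X -` {..0} \<inter> space M" by auto
    moreover have "X -` {..0} \<inter> space M \<in> sets M" by measurable
    ultimately show ?thesis using X_pos AE_iff_measurable[of "X -` {..0} \<inter> space M" M "\<lambda>\<omega>. X \<omega> > 0"] by simp
  qed
  then have "(\<integral>\<^sup>+x. ennreal (p x) * indicator {..0} x \<partial>lborel) = 0"
    using distributed_emeasure[OF X_dens, of "{..0}"] by simp
  then have "AE x in lborel. ennreal (p x) * indicator {..0} x = 0"
    by (subst (asm) nn_integral_0_iff_AE) auto
  then have pq: "AE x in lborel. ennreal (p x) = ennreal (q x)"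
    by eventually_elim (auto simp: q_def indicator_def split: if_splits)
  have Xq: "distributed M lborel X (\<lambda>x. ennreal (q x))"
  proof -
    have "(\<lambda>x. ennreal (q x)) \<in> borel_measurable lborel" "(\<lambda>x. ennreal (p x)) \<in> borel_measurable lborel" by auto
    from distributed_cong_density[OF pq this(1) this(2)] X_dens show ?thesis by blast
  qed
  have Jt: "distributed M (lborel \<Otimes>\<^sub>M lborel) (\<lambda>\<omega>. (X \<omega>, b t \<omega>))
      (\<lambda>(x, u). ennreal (q x) * ennreal (bdens a c u))"
    using joint_law[OF M Xq bridge indep m_pos t] unfolding a_def c_def .
  have transfer: "(\<integral>\<^sup>+\<omega>. H (X \<omega>) (b t \<omega>) \<partial>M) = (\<integral>\<^sup>+x. \<integral>\<^sup>+u. ennreal (q x * bdens a c u) * H x u \<partial>lborel \<partial>lborel)"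
    if [measurable]: "(\<lambda>(x, u). H x u) \<in> borel_measurable (lborel \<Otimes>\<^sub>M lborel)" for H
  proof -
    have "(\<integral>\<^sup>+\<omega>. H (X \<omega>) (b t \<omega>) \<partial>M) = (\<integral>\<^sup>+xu. (case xu of (x, u) \<Rightarrow> ennreal (q x) * ennreal (bdens a c u)) * (case xu of (x, u) \<Rightarrow> H x u) \<partial>(lborel \<Otimes>\<^sub>M lborel))"
      by (subst distributed_nn_integral[OF Jt]) auto
    also have "\<dots> = (\<integral>\<^sup>+x. \<integral>\<^sup>+u. ennreal (q x * bdens a c u) * H x u \<partial>lborel \<partial>lborel)"
      by (subst lborel.nn_integral_fst[symmetric]) (auto simp: ennreal_mult q_nn bdens_nonneg a c)
    finally show ?thesis .
  qed
  define \<psi> where "\<psi> = (\<lambda>y. indicator {0<..} y * y powr (a - 1) / Beta a c)"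
  have psi_meas[measurable]: "\<psi> \<in> borel_measurable borel" unfolding \<psi>_def by measurable
  define Jd where "Jd = (\<lambda>y. \<integral>\<^sup>+x. ennreal (indicator {y<..} x * (p x * x powr (1 - m * T) * (x - y) powr (m * (T - t) - 1))) \<partial>lborel)"
  define Jn where "Jn = (\<lambda>y. \<integral>\<^sup>+x. ennreal (indicator {y<..} x * (p x * x powr (2 - m * T) * (x - y) powr (m * (T - t) - 1))) \<partial>lborel)"
  have Jd_meas[measurable]: "Jd \<in> borel_measurable borel" unfolding Jd_def by (rule Jmeas) simp
  have Jn_meas[measurable]: "Jn \<in> borel_measurable borel" unfolding Jn_def by (rule Jmeas) simp
  have ac': "1 - (m * t + m * (T - t)) = 1 - m * T" by (simp add: algebra_simps)
  have S1: "(\<integral>\<^sup>+x. \<integral>\<^sup>+u. ennreal (q x * bdens a c u) * G (x * u) \<partial>lborel \<partial>lborel) = (\<integral>\<^sup>+y. ennreal (\<psi> y) * Jd y * G y \<partial>lborel)"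
    if [measurable]: "G \<in> borel_measurable borel" for G
  proof -
    have "(\<integral>\<^sup>+x. \<integral>\<^sup>+u. ennreal (q x * bdens a c u) * G (x * u) \<partial>lborel \<partial>lborel) = (\<integral>\<^sup>+y. ennreal (indicator {0<..} y * y powr (a - 1) / Beta a c) *
       (\<integral>\<^sup>+x. ennreal (indicator {y<..} x * (q x * x powr (1 - (a + c)) * (x - y) powr (c - 1))) \<partial>lborel) * G y \<partial>lborel)"
      by (rule star[OF a c q_meas q_nn q0 that])
    also have "\<dots> = (\<integral>\<^sup>+y. ennreal (\<psi> y) * Jd y * G y \<partial>lborel)"
    proof (intro nn_integral_cong)
      fix y :: real
      show "ennreal (indicator {0<..} y * y powr (a - 1) / Beta a c) *
       (\<integral>\<^sup>+x. ennreal (indicator {y<..} x * (q x * x powr (1 - (a + c)) * (x - y) powr (c - 1))) \<partial>lborel) * G y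
         = ennreal (\<psi> y) * Jd y * G y"
      proof (cases "y > 0")
        case True
        have "(\<integral>\<^sup>+x. ennreal (indicator {y<..} x * (q x * x powr (1 - (a + c)) * (x - y) powr (c - 1))) \<partial>lborel) = Jd y"
          unfolding Jd_def
          by (intro nn_integral_cong) (use True in \<open>auto simp: indicator_def qp a_def c_def ac'\<close>)
        then show ?thesis by (simp add: \<psi>_def)
      next
        case False then show ?thesis by (simp add: \<psi>_def)
      qed
    qed
    finally show ?thesis .
  qed
  have xp: "x * x powr (1 - m * T) = x powr (2 - m * T)" if "x > 0" for x
  proof -
    have "x powr (1 + (1 - m * T)) = x powr 1 * x powr (1 - m * T)" by (simp only: powr_add)
    then show ?thesis using that by simp
  qed
  define q2 where "q2 = (\<lambda>x. q x * x)"
  have q2_meas[measurable]: "q2 \<in> borel_measurable borel" unfolding q2_def by measurable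
  have q2_nn: "\<And>x. q2 x \<ge> 0" unfolding q2_def using q_nn q0 by (metis mult_nonneg_nonneg mult_zero_left not_le less_imp_le)
  have q20: "\<And>x. x \<le> 0 \<Longrightarrow> q2 x = 0" unfolding q2_def using q0 by simp
  have S2: "(\<integral>\<^sup>+x. \<integral>\<^sup>+u. ennreal (q x * bdens a c u) * (ennreal x * G (x * u)) \<partial>lborel \<partial>lborel) = (\<integral>\<^sup>+y. ennreal (\<psi> y) * Jn y * G y \<partial>lborel)"
    if [measurable]: "G \<in> borel_measurable borel" for G
  proof -
    have "(\<integral>\<^sup>+x. \<integral>\<^sup>+u. ennreal (q x * bdens a c u) * (ennreal x * G (x * u)) \<partial>lborel \<partial>lborel)
        = (\<integral>\<^sup>+x. \<integral>\<^sup>+u. ennreal (q2 x * bdens a c u) * G (x * u) \<partial>lborel \<partial>lborel)"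
    proof (intro nn_integral_cong)
      fix x u :: real
      show "ennreal (q x * bdens a c u) * (ennreal x * G (x * u)) = ennreal (q2 x * bdens a c u) * G (x * u)"
      proof (cases "x > 0")
        case True
        have e: "q2 x * bdens a c u = (q x * bdens a c u) * x" by (simp add: q2_def mult_ac)
        have "ennreal (q2 x * bdens a c u) = ennreal (q x * bdens a c u) * ennreal x"
          unfolding e using True q_nn[of x] bdens_nonneg[OF a c, of u] by (intro ennreal_mult) auto
        then show ?thesis by (simp add: mult.assoc mult.left_commute)
      next
        case False then show ?thesis by (simp add: q2_def q0)
      qed
    qed
    also have "\<dots> = (\<integral>\<^sup>+y. ennreal (indicator {0<..} y * y powr (a - 1) / Beta a c) *
       (\<integral>\<^sup>+x. ennreal (indicator {y<..} x * (q2 x * x powr (1 - (a + c)) * (x - y) powr (c - 1))) \<partial>lborel) * G y \<partial>lborel)"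
      by (rule star[OF a c q2_meas q2_nn q20 that])
    also have "\<dots> = (\<integral>\<^sup>+y. ennreal (\<psi> y) * Jn y * G y \<partial>lborel)"
    proof (intro nn_integral_cong)
      fix y :: real
      show "ennreal (indicator {0<..} y * y powr (a - 1) / Beta a c) *
       (\<integral>\<^sup>+x. ennreal (indicator {y<..} x * (q2 x * x powr (1 - (a + c)) * (x - y) powr (c - 1))) \<partial>lborel) * G y
         = ennreal (\<psi> y) * Jn y * G y"
      proof (cases "y > 0")
        case True
        have "(\<integral>\<^sup>+x. ennreal (indicator {y<..} x * (q2 x * x powr (1 - (a + c)) * (x - y) powr (c - 1))) \<partial>lborel) = Jn y"
          unfolding Jn_def
        proof (intro nn_integral_cong)
          fix x :: real
          show "ennreal (indicator {y<..} x * (q2 x * x powr (1 - (a + c)) * (x - y) powr (c - 1))) =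
                ennreal (indicator {y<..} x * (p x * x powr (2 - m * T) * (x - y) powr (m * (T - t) - 1)))"
          proof (cases "y < x")
            case True
            then have "x > 0" using \<open>y > 0\<close> by simp
            then have "q2 x * x powr (1 - (a + c)) = p x * x powr (2 - m * T)"
              using xp[of x] by (simp add: q2_def qp a_def c_def ac' mult_ac)
            then show ?thesis by (simp add: c_def)
          qed simp
        qed
        then show ?thesis by (simp add: \<psi>_def)
      next
        case False then show ?thesis by (simp add: \<psi>_def)
      qed
    qed
    finally show ?thesis .
  qed
  have Sden: "S_den m T p t y = enn2real (Jd y)" for y
    unfolding S_den_def Jd_def by (rule set_int_nn) (auto simp: p_nonneg)
  have Snum: "S_num m T p t y = enn2real (Jn y)" for y
    unfolding S_num_def Jn_def by (rule set_int_nn) (auto simp: p_nonneg)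
  have one_meas: "(\<lambda>(x::real, u::real). 1::ennreal) \<in> borel_measurable (lborel \<Otimes>\<^sub>M lborel)" by simp
  have tot_d: "(\<integral>\<^sup>+y. ennreal (\<psi> y) * Jd y \<partial>lborel) = 1"
  proof -
    have "(\<integral>\<^sup>+y. ennreal (\<psi> y) * Jd y \<partial>lborel) = (\<integral>\<^sup>+y. ennreal (\<psi> y) * Jd y * (\<lambda>_. 1) y \<partial>lborel)" by simp
    also have "\<dots> = (\<integral>\<^sup>+x. \<integral>\<^sup>+u. ennreal (q x * bdens a c u) * (\<lambda>_. 1) (x * u) \<partial>lborel \<partial>lborel)"
      by (rule S1[symmetric]) simp
    also have "\<dots> = (\<integral>\<^sup>+\<omega>. (\<lambda>_ _. 1) (X \<omega>) (b t \<omega>) \<partial>M)"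
      by (rule transfer[symmetric]) simp
    also have "\<dots> = 1" using M.emeasure_space_1 by simp
    finally show ?thesis .
  qed
  have EX: "(\<integral>\<^sup>+\<omega>. ennreal (X \<omega>) \<partial>M) < \<infinity>"
  proof -
    have "(\<integral>\<^sup>+\<omega>. ennreal (X \<omega>) \<partial>M) \<le> (\<integral>\<^sup>+\<omega>. ennreal (norm (X \<omega>)) \<partial>M)"
      by (intro nn_integral_mono) (simp add: ennreal_leI)
    also have "\<dots> < \<infinity>" using X_int unfolding integrable_iff_bounded by blast
    finally show ?thesis .
  qed
  have tot_n: "(\<integral>\<^sup>+y. ennreal (\<psi> y) * Jn y \<partial>lborel) = (\<integral>\<^sup>+\<omega>. ennreal (X \<omega>) \<partial>M)"
  proof -
    have "(\<integral>\<^sup>+y. ennreal (\<psi> y) * Jn y \<partial>lborel) = (\<integral>\<^sup>+y. ennreal (\<psi> y) * Jn y * (\<lambda>_. 1) y \<partial>lborel)" by simp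
    also have "\<dots> = (\<integral>\<^sup>+x. \<integral>\<^sup>+u. ennreal (q x * bdens a c u) * (ennreal x * (\<lambda>_. 1) (x * u)) \<partial>lborel \<partial>lborel)"
      by (rule S2[symmetric]) simp
    also have "\<dots> = (\<integral>\<^sup>+\<omega>. (\<lambda>x _. ennreal x * 1) (X \<omega>) (b t \<omega>) \<partial>M)"
      by (rule transfer[symmetric]) simp
    finally show ?thesis by simp
  qed
  have AEd: "AE y in lborel. ennreal (\<psi> y) * Jd y \<noteq> \<infinity>"
    by (rule nn_integral_noteq_infinite) (auto simp: tot_d)
  have AEn: "AE y in lborel. ennreal (\<psi> y) * Jn y \<noteq> \<infinity>"
    by (rule nn_integral_noteq_infinite) (use EX tot_n in auto)
  have Jd0: "Jn y = 0" if "Jd y = 0" "y \<ge> 0" for y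
  proof -
    have "AE x in lborel. ennreal (indicator {y<..} x * (p x * x powr (1 - m * T) * (x - y) powr (m * (T - t) - 1))) = 0"
      using that(1) unfolding Jd_def by (subst (asm) nn_integral_0_iff_AE) (auto simp: ind_Ioi)
    then have "AE x in lborel. ennreal (indicator {y<..} x * (p x * x powr (2 - m * T) * (x - y) powr (m * (T - t) - 1))) = 0"
    proof eventually_elim
      case (elim x)
      show ?case
      proof (cases "y < x")
        case True
        then have x0: "x > 0" using that(2) by simp
        have nn: "p x * x powr (1 - m * T) * (x - y) powr (m * (T - t) - 1) \<ge> 0" using p_nonneg[of x] by simp
        from elim True have "p x * x powr (1 - m * T) * (x - y) powr (m * (T - t) - 1) = 0"
          using nn by (simp add: indicator_def)
        then have "p x = 0 \<or> (x - y) powr (m * (T - t) - 1) = 0" using x0 by simp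
        then show ?thesis by auto
      qed simp
    qed
    then show ?thesis unfolding Jn_def by (subst nn_integral_0_iff_AE) (auto simp: ind_Ioi)
  qed
  define F where "F = (\<lambda>y. ennreal (max 0 (S_fun m T PtT p t y - K)))"
  have F_meas[measurable]: "F \<in> borel_measurable borel" unfolding F_def by measurable
  define Ind where "Ind = (\<lambda>y. indicator {ystar<..} y :: ennreal)"
  have Ind_meas[measurable]: "Ind \<in> borel_measurable borel" unfolding Ind_def by measurable
  have pw: "AE y in lborel. ennreal (\<psi> y) * Jd y * F y + ennreal K * (ennreal (\<psi> y) * Jd y * Ind y)
       = ennreal PtT * (ennreal (\<psi> y) * Jn y * Ind y)"
    using AEd AEn AE_lborel_singleton[of ystar]
  proof eventually_elim
    case (elim y)
    show ?case
    proof (cases "y > 0")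
      case False
      then have "\<psi> y = 0" by (simp add: \<psi>_def)
      then show ?thesis by simp
    next
      case ypos: True
      have psi: "\<psi> y > 0" using ypos Bpos by (simp add: \<psi>_def)
      have dfin: "Jd y \<noteq> \<infinity>" using elim(1) psi by (auto simp: ennreal_mult_eq_top_iff)
      have nfin: "Jn y \<noteq> \<infinity>" using elim(2) psi by (auto simp: ennreal_mult_eq_top_iff)
      define dr where "dr = enn2real (Jd y)"
      define nr where "nr = enn2real (Jn y)"
      have Jd_eq: "Jd y = ennreal dr" using dfin unfolding dr_def by (simp add: ennreal_enn2real_if)
      have Jn_eq: "Jn y = ennreal nr" using nfin unfolding nr_def by (simp add: ennreal_enn2real_if)
      have dr0: "dr \<ge> 0" and nr0: "nr \<ge> 0" by (simp_all add: dr_def nr_def)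
      have Sy: "S_fun m T PtT p t y = PtT * nr / dr" unfolding S_fun_def Sden Snum dr_def nr_def ..
      show ?thesis
      proof (cases "dr = 0")
        case True
        then have J0: "Jd y = 0" using Jd_eq by simp
        then have "Jn y = 0" using Jd0 ypos by simp
        then show ?thesis using J0 by simp
      next
        case False
        then have dpos: "dr > 0" using dr0 by simp
        have den: "S_den m T p t y > 0" using dpos by (simp add: Sden dr_def)
        show ?thesis
        proof (cases "y < ystar")
          case True
          have "S_fun m T PtT p t y \<le> K" by (rule below[OF ypos True den])
          then have "F y = 0" by (simp add: F_def ennreal_eq_0_iff)
          moreover have "Ind y = 0" using True by (simp add: Ind_def)
          ultimately show ?thesis by simp
        next
          case False
          then have yg: "y > ystar" using elim(3) by simp
          have SK: "S_fun m T PtT p t y \<ge> K" by (rule above[OF yg den])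
          have I1: "Ind y = 1" using yg by (simp add: Ind_def)
          have F1: "F y = ennreal (PtT * nr / dr - K)" using SK Sy by (simp add: F_def)
          have SK': "PtT * nr / dr - K \<ge> 0" using SK Sy by simp
          have r: "\<psi> y * dr * (PtT * nr / dr - K) + K * (\<psi> y * dr) = PtT * (\<psi> y * nr)"
            using dpos by (simp add: field_simps)
          have "ennreal (\<psi> y) * Jd y * F y + ennreal K * (ennreal (\<psi> y) * Jd y * Ind y)
              = ennreal (\<psi> y * dr * (PtT * nr / dr - K) + K * (\<psi> y * dr))"
          proof -
            have p1: "ennreal (\<psi> y * dr * (PtT * nr / dr - K)) = ennreal (\<psi> y) * ennreal dr * ennreal (PtT * nr / dr - K)"
              using psi dr0 SK' by (simp add: ennreal_mult)
            have p2: "ennreal (K * (\<psi> y * dr)) = ennreal K * (ennreal (\<psi> y) * ennreal dr)"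
              using psi dr0 K by (simp add: ennreal_mult)
            have "ennreal (\<psi> y * dr * (PtT * nr / dr - K) + K * (\<psi> y * dr)) = ennreal (\<psi> y * dr * (PtT * nr / dr - K)) + ennreal (K * (\<psi> y * dr))"
              using psi dr0 SK' K by (intro ennreal_plus) auto
            then show ?thesis unfolding Jd_eq F1 I1 p1 p2 by simp
          qed
          also have "\<dots> = ennreal (PtT * (\<psi> y * nr))" unfolding r ..
          also have "\<dots> = ennreal PtT * (ennreal (\<psi> y) * Jn y * Ind y)"
            unfolding Jn_eq I1 using psi nr0 PtT by (simp add: ennreal_mult)
          finally show ?thesis .
        qed
      qed
    qed
  qed
  define L where "L = (\<integral>\<^sup>+y. ennreal (\<psi> y) * Jd y * F y \<partial>lborel)"
  define A where "A = (\<integral>\<^sup>+y. ennreal (\<psi> y) * Jd y * Ind y \<partial>lborel)"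
  define Bn where "Bn = (\<integral>\<^sup>+y. ennreal (\<psi> y) * Jn y * Ind y \<partial>lborel)"
  have eqn: "L + ennreal K * A = ennreal PtT * Bn"
  proof -
    have "L + ennreal K * A = (\<integral>\<^sup>+y. ennreal (\<psi> y) * Jd y * F y + ennreal K * (ennreal (\<psi> y) * Jd y * Ind y) \<partial>lborel)"
      unfolding L_def A_def by (subst nn_integral_add) (auto simp: nn_integral_cmult)
    also have "\<dots> = (\<integral>\<^sup>+y. ennreal PtT * (ennreal (\<psi> y) * Jn y * Ind y) \<partial>lborel)"
      by (rule nn_integral_cong_AE[OF pw])
    also have "\<dots> = ennreal PtT * Bn" unfolding Bn_def by (subst nn_integral_cmult) auto
    finally show ?thesis .
  qed
  have "A \<le> (\<integral>\<^sup>+y. ennreal (\<psi> y) * Jd y \<partial>lborel)"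
    unfolding A_def by (intro nn_integral_mono) (auto simp: Ind_def indicator_def)
  then have Afin: "A < \<infinity>" using tot_d by (simp add: order_le_less_trans)
  have "Bn \<le> (\<integral>\<^sup>+y. ennreal (\<psi> y) * Jn y \<partial>lborel)"
    unfolding Bn_def by (intro nn_integral_mono) (auto simp: Ind_def indicator_def)
  then have Bfin: "Bn < \<infinity>" using tot_n EX by (simp add: order_le_less_trans)
  have "L \<le> L + ennreal K * A" by simp
  also have "\<dots> = ennreal PtT * Bn" by (rule eqn)
  also have "\<dots> < \<infinity>" using Bfin by (simp add: ennreal_mult_less_top)
  finally have Lfin: "L < \<infinity>" .
  have KAfin: "ennreal K * A < \<infinity>" using Afin by (simp add: ennreal_mult_less_top)
  have real_eq: "enn2real L = PtT * enn2real Bn - K * enn2real A"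
  proof -
    have "enn2real (L + ennreal K * A) = enn2real (ennreal PtT * Bn)" using eqn by simp
    then have "enn2real L + K * enn2real A = PtT * enn2real Bn"
      using Lfin KAfin K PtT by (simp add: enn2real_plus enn2real_mult)
    then show ?thesis by simp
  qed
  have bm_t[measurable]: "b t \<in> borel_measurable M"
    using bridge t unfolding gamma_bridge_def by auto
  have LHS: "(\<integral>\<omega>. max 0 (S_fun m T PtT p t (X \<omega> * b t \<omega>) - K) \<partial>M) = enn2real L"
  proof -
    have "(\<integral>\<omega>. max 0 (S_fun m T PtT p t (X \<omega> * b t \<omega>) - K) \<partial>M)
        = enn2real (\<integral>\<^sup>+\<omega>. ennreal (max 0 (S_fun m T PtT p t (X \<omega> * b t \<omega>) - K)) \<partial>M)"
      by (rule integral_eq_nn_integral) auto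
    also have "(\<integral>\<^sup>+\<omega>. ennreal (max 0 (S_fun m T PtT p t (X \<omega> * b t \<omega>) - K)) \<partial>M)
        = (\<integral>\<^sup>+\<omega>. (\<lambda>x u. F (x * u)) (X \<omega>) (b t \<omega>) \<partial>M)" by (simp add: F_def)
    also have "\<dots> = (\<integral>\<^sup>+x. \<integral>\<^sup>+u. ennreal (q x * bdens a c u) * F (x * u) \<partial>lborel \<partial>lborel)"
      by (rule transfer) simp
    also have "\<dots> = L" unfolding L_def by (rule S1) simp
    finally show ?thesis .
  qed
  define bc where "bc = (\<lambda>x. beta_compl (m * t) (m * (T - t)) (ystar / x))"
  have bc_meas[measurable]: "bc \<in> borel_measurable borel" unfolding bc_def by measurable
  have bc_nn: "bc x \<ge> 0" for x
  proof -
    have "set_lebesgue_integral lborel {ystar / x..1} (\<lambda>z. z powr (m * t - 1) * (1 - z) powr (m * (T - t) - 1)) \<ge> 0"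
      by (subst set_int_nn) auto
    moreover have "set_lebesgue_integral lborel {0..1} (\<lambda>z. z powr (m * t - 1) * (1 - z) powr (m * (T - t) - 1)) \<ge> 0"
      by (subst set_int_nn) auto
    ultimately show ?thesis unfolding bc_def beta_compl_def by simp
  qed
  have inner: "ennreal (q x) * (\<integral>\<^sup>+u. ennreal (bdens a c u) * indicator {ystar<..} (x * u) \<partial>lborel)
      = ennreal (indicator {ystar<..} x * (p x * bc x))" for x
  proof (cases "x > 0")
    case True
    show ?thesis
      using bc_lemma[OF a c True ystar] True p_nonneg[of x] bc_nn[of x]
      by (simp add: qp bc_def a_def c_def ennreal_mult indicator_def)
  next
    case False
    then show ?thesis using ystar q0[of x] by (simp add: indicator_def)
  qed
  have A_eq: "A = (\<integral>\<^sup>+x. ennreal (indicator {ystar<..} x * (p x * bc x)) \<partial>lborel)"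
  proof -
    have "A = (\<integral>\<^sup>+x. \<integral>\<^sup>+u. ennreal (q x * bdens a c u) * Ind (x * u) \<partial>lborel \<partial>lborel)"
      unfolding A_def by (rule S1[symmetric]) simp
    also have "\<dots> = (\<integral>\<^sup>+x. ennreal (q x) * (\<integral>\<^sup>+u. ennreal (bdens a c u) * indicator {ystar<..} (x * u) \<partial>lborel) \<partial>lborel)"
      by (intro nn_integral_cong, subst nn_integral_cmult[symmetric])
         (auto simp: Ind_def ennreal_mult q_nn bdens_nonneg a c mult.assoc)
    also have "\<dots> = (\<integral>\<^sup>+x. ennreal (indicator {ystar<..} x * (p x * bc x)) \<partial>lborel)"
      by (simp add: inner)
    finally show ?thesis .
  qed
  have B_eq: "Bn = (\<integral>\<^sup>+x. ennreal (indicator {ystar<..} x * (p x * x * bc x)) \<partial>lborel)"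
  proof -
    have "Bn = (\<integral>\<^sup>+x. \<integral>\<^sup>+u. ennreal (q x * bdens a c u) * (ennreal x * Ind (x * u)) \<partial>lborel \<partial>lborel)"
      unfolding Bn_def by (rule S2[symmetric]) simp
    also have "\<dots> = (\<integral>\<^sup>+x. ennreal x * (ennreal (q x) * (\<integral>\<^sup>+u. ennreal (bdens a c u) * indicator {ystar<..} (x * u) \<partial>lborel)) \<partial>lborel)"
      by (intro nn_integral_cong, simp only: mult.assoc[symmetric], subst nn_integral_cmult[symmetric])
         (auto simp: Ind_def ennreal_mult q_nn bdens_nonneg a c mult_ac)
    also have "\<dots> = (\<integral>\<^sup>+x. ennreal (indicator {ystar<..} x * (p x * x * bc x)) \<partial>lborel)"
    proof (intro nn_integral_cong)
      fix x :: real
      show "ennreal x * (ennreal (q x) * (\<integral>\<^sup>+u. ennreal (bdens a c u) * indicator {ystar<..} (x * u) \<partial>lborel))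
         = ennreal (indicator {ystar<..} x * (p x * x * bc x))"
      proof (cases "x > 0")
        case True
        then show ?thesis unfolding inner using p_nonneg[of x] bc_nn[of x]
          by (simp add: ennreal_mult[symmetric] indicator_def mult_ac)
      next
        case False
        then show ?thesis using ystar q0[of x] by (simp add: indicator_def)
      qed
    qed
    finally show ?thesis .
  qed
  define f1 where "f1 = (\<lambda>x. indicator {ystar<..} x * (p x * bc x))"
  define f2 where "f2 = (\<lambda>x. indicator {ystar<..} x * (p x * x * bc x))"
  have f1_meas[measurable]: "f1 \<in> borel_measurable borel" unfolding f1_def by measurable
  have f2_meas[measurable]: "f2 \<in> borel_measurable borel" unfolding f2_def by measurable
  have f1_nn: "f1 x \<ge> 0" for x unfolding f1_def using p_nonneg[of x] bc_nn[of x] by (simp add: indicator_def)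
  have f2_nn: "f2 x \<ge> 0" for x unfolding f2_def using p_nonneg[of x] bc_nn[of x] ystar
    by (auto simp: indicator_def)
  have i1: "integrable lborel f1"
    by (rule integrableI_nonneg) (use f1_nn Afin A_eq in \<open>auto simp: f1_def\<close>)
  have i2: "integrable lborel f2"
    by (rule integrableI_nonneg) (use f2_nn Bfin B_eq in \<open>auto simp: f2_def\<close>)
  have I1: "integral\<^sup>L lborel f1 = enn2real A"
    unfolding A_eq f1_def by (rule integral_eq_nn_integral) (use f1_nn in \<open>auto simp: f1_def\<close>)
  have I2: "integral\<^sup>L lborel f2 = enn2real Bn"
    unfolding B_eq f2_def by (rule integral_eq_nn_integral) (use f2_nn in \<open>auto simp: f2_def\<close>)
  have RHS: "set_lebesgue_integral lborel {ystar<..}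
           (\<lambda>x. p x * (x * PtT - K) * beta_compl (m * t) (m * (T - t)) (ystar / x))
      = PtT * enn2real Bn - K * enn2real A"
  proof -
    have "set_lebesgue_integral lborel {ystar<..}
           (\<lambda>x. p x * (x * PtT - K) * beta_compl (m * t) (m * (T - t)) (ystar / x))
        = (\<integral>x. PtT * f2 x - K * f1 x \<partial>lborel)"
      unfolding set_lebesgue_integral_def
      by (intro Bochner_Integration.integral_cong) (auto simp: f1_def f2_def bc_def indicator_def algebra_simps)
    also have "\<dots> = PtT * integral\<^sup>L lborel f2 - K * integral\<^sup>L lborel f1"
      using i1 i2 by simp
    finally show ?thesis using I1 I2 by simp
  qed
  show ?thesis unfolding LHS RHS real_eq ..
qed

end
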